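(* In the 1-sided False Positive regime, when the realized subgraph may contain cycles, any algorithm requires $\Omega(m\log m)$ queries in the worst case (over moldgraphs with $m$ edges and such realized subgraphs) to discover a realized spanning tree with constant failure probability.
   Context: Problem (graph connectivity with noisy queries): a graph $G=(V,E)$ (possibly with parallel edges), the moldgraph, with $m$ edges is given. An adversary selects an arbitrary connected spanning subgraph of $G$ to be realized. The algorithm may query an oracle on any edge $e$ (``Is $e$ realized?''), receiving ``Yes''/``No''; each query costs $1$; answers to distinct queries (including repeated queries of the same edge) are independent. Goal: output a spanning tree of $G$ all of whose edges are realized. In the 1-sided False Positive regime: for a realized edge the answer is always ``Yes''; for a non-realized edge the answer is ``Yes'' with a constant probability $p<1/2$ and ``No'' with probability $1-p$. *)

theory Defs
  imports "HOL-Probability.Probability"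
begin

text \<open>A multigraph: finite vertex set V, finite edge set E (edge identifiers, so
parallel edges are allowed), each edge has a two-element set of endpoints.\<close>
definition multigraph :: "'v set \<Rightarrow> 'e set \<Rightarrow> ('e \<Rightarrow> 'v set) \<Rightarrow> bool" where
  "multigraph V E ends \<longleftrightarrow> finite V \<and> finite E \<and>
     (\<forall>e\<in>E. ends e \<subseteq> V \<and> card (ends e) = 2)"

inductive reach :: "('e \<Rightarrow> 'v set) \<Rightarrow> 'e set \<Rightarrow> 'v \<Rightarrow> 'v \<Rightarrow> bool"
  for ends F where
  refl: "reach ends F u u"
| step: "reach ends F u v \<Longrightarrow> e \<in> F \<Longrightarrow> ends e = {v, w} \<Longrightarrow> reach ends F u w"

definition conn_spanning :: "'v set \<Rightarrow> 'e set \<Rightarrow> ('e \<Rightarrow> 'v set) \<Rightarrow> 'e set \<Rightarrow> bool" where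
  "conn_spanning V E ends F \<longleftrightarrow> F \<subseteq> E \<and> (\<forall>u\<in>V. \<forall>v\<in>V. reach ends F u v)"

definition spanning_tree :: "'v set \<Rightarrow> 'e set \<Rightarrow> ('e \<Rightarrow> 'v set) \<Rightarrow> 'e set \<Rightarrow> bool" where
  "spanning_tree V E ends T \<longleftrightarrow> conn_spanning V E ends T \<and>
     (\<forall>e\<in>T. \<forall>u v. ends e = {u, v} \<longrightarrow> \<not> reach ends (T - {e}) u v)"

text \<open>Deterministic adaptive query algorithm (decision tree): either output an
edge set, or query an edge and continue in the Yes-branch or the No-branch.\<close>
datatype 'e qtree = Output "'e set" | Ask 'e "'e qtree" "'e qtree"

fun depth :: "'e qtree \<Rightarrow> nat" where
  "depth (Output S) = 0"
| "depth (Ask e t f) = Suc (max (depth t) (depth f))"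

text \<open>Execution against realized edge set H in the 1-sided false positive regime:
realized edges always answer Yes; non-realized edges answer Yes with probability p,
independently for every query (fresh coin at every query node).\<close>
fun run :: "real \<Rightarrow> 'e set \<Rightarrow> 'e qtree \<Rightarrow> 'e set pmf" where
  "run p H (Output S) = return_pmf S"
| "run p H (Ask e t f) =
     (if e \<in> H then run p H t
      else bind_pmf (bernoulli_pmf p) (\<lambda>b. if b then run p H t else run p H f))"

text \<open>A randomized algorithm is a probability distribution over decision trees.
Its success probability on realized subgraph H: output is a spanning tree of
the moldgraph all of whose edges are realized.\<close>
definition success_prob ::
  "real \<Rightarrow> 'v set \<Rightarrow> 'e set \<Rightarrow> ('e \<Rightarrow> 'v set) \<Rightarrow> 'e qtree pmf \<Rightarrow> 'e set \<Rightarrow> real" where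
  "success_prob p V E ends A H =
     measure_pmf.prob (bind_pmf A (run p H)) {T. spanning_tree V E ends T \<and> T \<subseteq> H}"

end

theory Submission
  imports Defs "HOL-Library.FuncSet"
begin


definition ell :: "real \<Rightarrow> real \<Rightarrow> real" where
  "ell \<theta> u = (if u \<le> \<theta> then 0 else \<theta> * ln (u / \<theta>))"

definition Phi :: "real \<Rightarrow> (nat \<Rightarrow> real) \<Rightarrow> real" where
  "Phi \<theta> f = f 0 + f 1 + f 2 -
     (if 0 < f 0 then f 0 * min (ell \<theta> (f 1 / f 0)) (ell \<theta> (f 2 / f 0)) else 0)"

lemma ell_nonneg: "0 < \<theta> \<Longrightarrow> 0 \<le> ell \<theta> u"
  by (auto simp: ell_def)

lemma ell_le: assumes "0 < \<theta>" "0 \<le> u" shows "ell \<theta> u \<le> u"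
proof (cases "u \<le> \<theta>")
  case True then show ?thesis using assms by (simp add: ell_def)
next
  case False
  then have "u / \<theta> > 0" using assms by simp
  then have "ln (u / \<theta>) \<le> u / \<theta> - 1" by (rule ln_le_minus_one)
  then have "\<theta> * ln (u / \<theta>) \<le> \<theta> * (u / \<theta> - 1)" using assms by (simp add: mult_left_mono)
  also have "\<dots> = u - \<theta>" using assms by (simp add: field_simps)
  finally show ?thesis using False assms by (simp add: ell_def)
qed

lemma ell_step:
  assumes "0 < \<theta>" "0 < p" "p < 1" "0 \<le> u"
  shows "ell \<theta> u \<le> ell \<theta> (p * u) + \<theta> * ln (1 / p)"
proof -
  have lp: "ln (1/p) > 0" using assms by simp
  consider "u \<le> \<theta>" | "p * u \<le> \<theta>" "\<theta> < u" | "\<theta> < p * u" by linarith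
  then show ?thesis
  proof cases
    case 1 then show ?thesis using assms lp ell_nonneg[of \<theta> "p*u"] by (simp add: ell_def)
  next
    case 2
    then have "u / \<theta> \<le> 1 / p" using assms by (simp add: field_simps)
    then have "ln (u / \<theta>) \<le> ln (1 / p)" using assms 2 by (subst ln_le_cancel_iff) auto
    then have "\<theta> * ln (u / \<theta>) \<le> \<theta> * ln (1 / p)" using assms by (simp add: mult_left_mono)
    then show ?thesis using 2 assms by (simp add: ell_def)
  next
    case 3
    then have u: "\<theta> < u" using assms
      by (smt (verit, best) mult_le_cancel_right2)
    have "u / \<theta> = (p * u / \<theta>) * (1 / p)" using assms by (simp add: field_simps)
    moreover have "ln ((p * u / \<theta>) * (1 / p)) = ln (p * u / \<theta>) + ln (1 / p)"
      by (rule ln_mult_pos) (use assms 3 in auto)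
    ultimately have "ln (u / \<theta>) = ln (p * u / \<theta>) + ln (1 / p)" by simp
    then show ?thesis using 3 u assms by (simp add: ell_def algebra_simps)
  qed
qed

lemma Phi_ge:
  assumes "0 < \<theta>" "0 \<le> f 0" "0 \<le> f 1" "0 \<le> f 2"
  shows "f 0 + f 1 \<le> Phi \<theta> f" "f 0 + f 2 \<le> Phi \<theta> f" "0 \<le> Phi \<theta> f" "f 0 \<le> Phi \<theta> f"
proof -
  have "(if 0 < f 0 then f 0 * min (ell \<theta> (f 1 / f 0)) (ell \<theta> (f 2 / f 0)) else 0) \<le> min (f 1) (f 2)"
  proof (cases "0 < f 0")
    case True
    have "f 0 * min (ell \<theta> (f 1 / f 0)) (ell \<theta> (f 2 / f 0)) \<le> f 0 * ell \<theta> (f 1 / f 0)"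
      using True by (simp add: mult_left_mono)
    also have "\<dots> \<le> f 0 * (f 1 / f 0)" by (rule mult_left_mono) (use True assms ell_le[of \<theta> "f 1 / f 0"] in auto)
    finally have a: "f 0 * min (ell \<theta> (f 1 / f 0)) (ell \<theta> (f 2 / f 0)) \<le> f 1" using True by simp
    have "f 0 * min (ell \<theta> (f 1 / f 0)) (ell \<theta> (f 2 / f 0)) \<le> f 0 * ell \<theta> (f 2 / f 0)"
      using True by (simp add: mult_left_mono)
    also have "\<dots> \<le> f 0 * (f 2 / f 0)" by (rule mult_left_mono) (use True assms ell_le[of \<theta> "f 2 / f 0"] in auto)
    finally have b: "f 0 * min (ell \<theta> (f 1 / f 0)) (ell \<theta> (f 2 / f 0)) \<le> f 2" using True by simp
    show ?thesis using a b True by simp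
  next
    case False then show ?thesis using assms by simp
  qed
  then show "f 0 + f 1 \<le> Phi \<theta> f" "f 0 + f 2 \<le> Phi \<theta> f" "0 \<le> Phi \<theta> f" "f 0 \<le> Phi \<theta> f"
    using assms unfolding Phi_def by auto
qed

lemma min_step:
  assumes "a \<le> a' + d" "0 \<le> (d::real)"
  shows "min a b \<le> min a' b + d" "min b a \<le> min b a' + d"
  using assms by (auto simp: min_def)

lemma Phi_step:
  assumes th: "0 < \<theta>" and p: "0 < p" "p < 1" and s0: "s0 = 1 \<or> s0 = 2"
    and f: "0 \<le> f 0" "0 \<le> f 1" "0 \<le> f 2"
  shows "Phi \<theta> (\<lambda>s. if s = s0 then p * f s else f s) + Phi \<theta> (\<lambda>s. if s = s0 then (1-p) * f s else 0)
         \<le> exp (\<theta> * ln (1/p)) * Phi \<theta> f"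
proof -
  define \<mu> where "\<mu> = \<theta> * ln (1/p)"
  have mu: "0 \<le> \<mu>" using th p by (simp add: \<mu>_def)
  have e: "1 + \<mu> \<le> exp \<mu>" by (rule exp_ge_add_one_self)
  have P0: "0 \<le> Phi \<theta> f" "f 0 \<le> Phi \<theta> f" using Phi_ge[OF th f] by auto
  have "Phi \<theta> f + \<mu> * f 0 \<le> (1 + \<mu>) * Phi \<theta> f" using P0 mu by (simp add: algebra_simps mult_left_mono)
  also have "\<dots> \<le> exp \<mu> * Phi \<theta> f" using e P0 by (simp add: mult_right_mono)
  finally have key: "Phi \<theta> f + \<mu> * f 0 \<le> exp \<mu> * Phi \<theta> f" .
  show ?thesis
  proof (cases "0 < f 0")
    case False
    then have z: "f 0 = 0" using f by simp
    have "Phi \<theta> (\<lambda>s. if s = s0 then p * f s else f s) + Phi \<theta> (\<lambda>s. if s = s0 then (1-p) * f s else 0)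
          = Phi \<theta> f" using s0 z by (auto simp: Phi_def algebra_simps)
    then show ?thesis using key z \<mu>_def by simp
  next
    case True
    have "min (ell \<theta> (f 1 / f 0)) (ell \<theta> (f 2 / f 0)) \<le>
          min (ell \<theta> ((if 1 = s0 then p * f 1 else f 1) / f 0)) (ell \<theta> ((if 2 = s0 then p * f 2 else f 2) / f 0)) + \<mu>"
      using s0
    proof
      assume "s0 = 1"
      have "ell \<theta> (f 1 / f 0) \<le> ell \<theta> (p * (f 1 / f 0)) + \<mu>"
        unfolding \<mu>_def by (rule ell_step) (use th p f True in auto)
      then show ?thesis using \<open>s0 = 1\<close> using mu by (auto intro: min_step)
    next
      assume "s0 = 2"
      have "ell \<theta> (f 2 / f 0) \<le> ell \<theta> (p * (f 2 / f 0)) + \<mu>"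
        unfolding \<mu>_def by (rule ell_step) (use th p f True in auto)
      then show ?thesis using \<open>s0 = 2\<close> using mu by (auto intro: min_step)
    qed
    then have m: "f 0 * min (ell \<theta> (f 1 / f 0)) (ell \<theta> (f 2 / f 0)) \<le>
          f 0 * min (ell \<theta> ((if 1 = s0 then p * f 1 else f 1) / f 0)) (ell \<theta> ((if 2 = s0 then p * f 2 else f 2) / f 0)) + \<mu> * f 0"
      using True by (smt (verit, ccfv_threshold) mult.commute mult_le_cancel_left_pos ring_class.ring_distribs(1))
    have "Phi \<theta> (\<lambda>s. if s = s0 then p * f s else f s) + Phi \<theta> (\<lambda>s. if s = s0 then (1-p) * f s else 0)
       = f 0 + f 1 + f 2 - f 0 * min (ell \<theta> ((if 1 = s0 then p * f 1 else f 1) / f 0)) (ell \<theta> ((if 2 = s0 then p * f 2 else f 2) / f 0))"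
      using s0 True by (auto simp: Phi_def algebra_simps)
    also have "\<dots> \<le> Phi \<theta> f + \<mu> * f 0" using m True by (simp add: Phi_def)
    also have "\<dots> \<le> exp \<mu> * Phi \<theta> f" by (rule key)
    finally show ?thesis by (simp add: \<mu>_def)
  qed
qed


definition Sig :: "nat \<Rightarrow> (nat \<Rightarrow> nat) set" where
  "Sig n = PiE {..<n} (\<lambda>_. {0,1,2})"

definition Wt :: "nat \<Rightarrow> (nat \<Rightarrow> nat \<Rightarrow> real) \<Rightarrow> (nat \<Rightarrow> nat) \<Rightarrow> real" where
  "Wt n w \<sigma> = (\<Prod>i<n. w i (\<sigma> i))"

definition Qv :: "real \<Rightarrow> nat \<Rightarrow> ((nat \<Rightarrow> nat) \<Rightarrow> nat set) \<Rightarrow> ((nat \<Rightarrow> nat) \<Rightarrow> nat set set)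
    \<Rightarrow> nat qtree \<Rightarrow> (nat \<Rightarrow> nat \<Rightarrow> real) \<Rightarrow> real" where
  "Qv p n H G t w = (\<Sum>\<sigma>\<in>Sig n. Wt n w \<sigma> * measure_pmf.prob (run p (H \<sigma>) t) (G \<sigma>))"

lemma finite_Sig: "finite (Sig n)"
  unfolding Sig_def by (rule finite_PiE) auto

lemma integ_pmf_bounded:
  fixes g :: "'a \<Rightarrow> real"
  assumes "\<And>x. \<bar>g x\<bar> \<le> B"
  shows "integrable (measure_pmf M) g"
  by (rule measure_pmf.integrable_const_bound[where B=B]) (auto simp: assms)

lemma meas_bind: "measure_pmf.prob (bind_pmf M f) X = (\<integral>x. measure_pmf.prob (f x) X \<partial>measure_pmf M)"
proof -
  have i: "integrable (measure_pmf M) (\<lambda>x. measure_pmf.prob (f x) X)"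
    by (rule integ_pmf_bounded[where B=1]) auto
  have "emeasure (measure_pmf (bind_pmf M f)) X = (\<integral>\<^sup>+x. emeasure (measure_pmf (f x)) X \<partial>measure_pmf M)"
    by (rule emeasure_bind_pmf)
  also have "\<dots> = (\<integral>\<^sup>+x. ennreal (measure_pmf.prob (f x) X) \<partial>measure_pmf M)"
    by (simp add: measure_pmf.emeasure_eq_measure)
  also have "\<dots> = ennreal (\<integral>x. measure_pmf.prob (f x) X \<partial>measure_pmf M)"
    by (rule nn_integral_eq_integral[OF i]) auto
  finally have "ennreal (measure_pmf.prob (bind_pmf M f) X) = ennreal (\<integral>x. measure_pmf.prob (f x) X \<partial>measure_pmf M)"
    by (simp add: measure_pmf.emeasure_eq_measure)
  then show ?thesis
    by (subst (asm) ennreal_inj) (auto intro: integral_nonneg_AE)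
qed

lemma run_Ask_prob:
  assumes "0 \<le> p" "p \<le> 1"
  shows "measure_pmf.prob (run p H (Ask e t f)) X =
    (if e \<in> H then measure_pmf.prob (run p H t) X
     else p * measure_pmf.prob (run p H t) X + (1 - p) * measure_pmf.prob (run p H f) X)"
  using assms by (simp add: meas_bind)

lemma Wt_upd:
  assumes "i < n"
  shows "Wt n (w(i := g)) \<sigma> = g (\<sigma> i) * (\<Prod>k\<in>{..<n}-{i}. w k (\<sigma> k))"
proof -
  have "Wt n (w(i := g)) \<sigma> = (\<Prod>k\<in>insert i ({..<n}-{i}). (w(i := g)) k (\<sigma> k))"
    unfolding Wt_def using assms by (simp add: insert_absorb)
  also have "\<dots> = (w(i := g)) i (\<sigma> i) * (\<Prod>k\<in>{..<n}-{i}. (w(i := g)) k (\<sigma> k))"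
    by (rule prod.insert) auto
  also have "(\<Prod>k\<in>{..<n}-{i}. (w(i := g)) k (\<sigma> k)) = (\<Prod>k\<in>{..<n}-{i}. w k (\<sigma> k))"
    by (rule prod.cong) auto
  also have "(w(i := g)) i (\<sigma> i) = g (\<sigma> i)" by simp
  finally show ?thesis .
qed

lemma Wt_split:
  assumes "i < n"
  shows "Wt n w \<sigma> = w i (\<sigma> i) * (\<Prod>k\<in>{..<n}-{i}. w k (\<sigma> k))"
proof -
  have "Wt n w \<sigma> = (\<Prod>k\<in>insert i ({..<n}-{i}). w k (\<sigma> k))"
    unfolding Wt_def using assms by (simp add: insert_absorb)
  also have "\<dots> = w i (\<sigma> i) * (\<Prod>k\<in>{..<n}-{i}. w k (\<sigma> k))"
    by (rule prod.insert) auto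
  finally show ?thesis .
qed

lemma prodPhi_upd:
  fixes n i :: nat
  assumes "i < n"
  shows "(\<Prod>k<n. Phi \<theta> ((w(i := g)) k)) = Phi \<theta> g * (\<Prod>k\<in>{..<n}-{i}. Phi \<theta> (w k))"
proof -
  have "(\<Prod>k<n. Phi \<theta> ((w(i := g)) k)) = (\<Prod>k\<in>insert i ({..<n}-{i}). Phi \<theta> ((w(i := g)) k))"
    using assms by (simp add: insert_absorb)
  also have "\<dots> = Phi \<theta> ((w(i := g)) i) * (\<Prod>k\<in>{..<n}-{i}. Phi \<theta> ((w(i := g)) k))"
    by (rule prod.insert) auto
  also have "(\<Prod>k\<in>{..<n}-{i}. Phi \<theta> ((w(i := g)) k)) = (\<Prod>k\<in>{..<n}-{i}. Phi \<theta> (w k))"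
    by (rule prod.cong) auto
  also have "(w(i := g)) i = g" by simp
  finally show ?thesis .
qed

lemma leaf_bound:
  assumes th: "0 < \<theta>" and w: "\<And>i s. 0 \<le> w i s"
    and pair: "\<And>i j \<sigma>. i < n \<Longrightarrow> j < 2 \<Longrightarrow> \<sigma> \<in> Sig n \<Longrightarrow> (2*i+j \<in> H \<sigma> \<longleftrightarrow> \<sigma> i \<noteq> Suc j)"
    and leaf: "\<And>\<sigma> S. \<sigma> \<in> Sig n \<Longrightarrow> S \<in> G \<sigma> \<Longrightarrow> S \<subseteq> H \<sigma> \<and> (\<forall>i<n. 2*i \<in> S \<or> Suc (2*i) \<in> S)"
  shows "(\<Sum>\<sigma>\<in>Sig n. Wt n w \<sigma> * indicator (G \<sigma>) S) \<le> (\<Prod>i<n. Phi \<theta> (w i))"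
proof (cases "\<exists>\<sigma>0\<in>Sig n. S \<in> G \<sigma>0")
  case False
  then have "(\<Sum>\<sigma>\<in>Sig n. Wt n w \<sigma> * indicator (G \<sigma>) S) = 0" by (auto intro: sum.neutral)
  moreover have "0 \<le> (\<Prod>i<n. Phi \<theta> (w i))"
    by (rule prod_nonneg) (use Phi_ge[OF th] w in auto)
  ultimately show ?thesis by simp
next
  case True
  then obtain \<sigma>0 where "\<sigma>0 \<in> Sig n" "S \<in> G \<sigma>0" by blast
  then have cov: "\<forall>i<n. 2*i \<in> S \<or> Suc (2*i) \<in> S" using leaf by blast
  define c where "c i = (if 2*i \<in> S then 0 else 1::nat)" for i
  have cS: "2*i + c i \<in> S" if "i < n" for i using cov that by (auto simp: c_def)
  have c2: "c i < 2" for i by (simp add: c_def)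
  define g where "g i s = (if s = Suc (c i) then 0 else w i s)" for i s
  have g0: "0 \<le> g i s" for i s using w by (simp add: g_def)
  have "(\<Sum>\<sigma>\<in>Sig n. Wt n w \<sigma> * indicator (G \<sigma>) S) \<le> (\<Sum>\<sigma>\<in>Sig n. \<Prod>i<n. g i (\<sigma> i))"
  proof (rule sum_mono)
    fix \<sigma> assume \<sigma>: "\<sigma> \<in> Sig n"
    show "Wt n w \<sigma> * indicator (G \<sigma>) S \<le> (\<Prod>i<n. g i (\<sigma> i))"
    proof (cases "S \<in> G \<sigma>")
      case True
      then have sub: "S \<subseteq> H \<sigma>" using leaf \<sigma> by blast
      have "\<sigma> i \<noteq> Suc (c i)" if "i < n" for i
        using pair[OF that c2 \<sigma>] cS[OF that] sub by blast
      then have "(\<Prod>i<n. g i (\<sigma> i)) = Wt n w \<sigma>" unfolding Wt_def g_def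
        by (intro prod.cong) auto
      then show ?thesis using True by simp
    next
      case False
      then show ?thesis by (simp add: prod_nonneg g0)
    qed
  qed
  also have "\<dots> = (\<Prod>i<n. \<Sum>s\<in>{0,1,2}. g i s)"
    unfolding Sig_def by (rule prod_sum_PiE[symmetric]) auto
  also have "\<dots> \<le> (\<Prod>i<n. Phi \<theta> (w i))"
  proof (rule prod_mono)
    fix i assume "i \<in> {..<n}"
    have "(\<Sum>s\<in>{0,1,2}. g i s) = g i 0 + g i 1 + g i 2" by simp
    also have "\<dots> \<le> Phi \<theta> (w i)"
      using Phi_ge[OF th, of "w i"] w by (cases "c i = 0") (auto simp: g_def c_def)
    finally show "0 \<le> (\<Sum>s\<in>{0,1,2}. g i s) \<and> (\<Sum>s\<in>{0,1,2}. g i s) \<le> Phi \<theta> (w i)"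
      using g0 by (auto intro: sum_nonneg)
  qed
  finally show ?thesis .
qed

lemma main_bound:
  assumes th: "0 < \<theta>" and p: "0 < p" "p < 1"
    and pair: "\<And>i j \<sigma>. i < n \<Longrightarrow> j < 2 \<Longrightarrow> \<sigma> \<in> Sig n \<Longrightarrow> (2*i+j \<in> H \<sigma> \<longleftrightarrow> \<sigma> i \<noteq> Suc j)"
    and other: "\<And>e. n \<le> e div 2 \<Longrightarrow> (\<forall>\<sigma>\<in>Sig n. e \<in> H \<sigma>) \<or> (\<forall>\<sigma>\<in>Sig n. e \<notin> H \<sigma>)"
    and leaf: "\<And>\<sigma> S. \<sigma> \<in> Sig n \<Longrightarrow> S \<in> G \<sigma> \<Longrightarrow> S \<subseteq> H \<sigma> \<and> (\<forall>i<n. 2*i \<in> S \<or> Suc (2*i) \<in> S)"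
  shows "(\<And>i s. 0 \<le> w i s) \<Longrightarrow>
     Qv p n H G t w \<le> exp (\<theta> * ln (1/p) * real (depth t)) * (\<Prod>i<n. Phi \<theta> (w i))"
proof (induction t arbitrary: w)
  case (Output S)
  have "Qv p n H G (Output S) w = (\<Sum>\<sigma>\<in>Sig n. Wt n w \<sigma> * indicator (G \<sigma>) S)"
    unfolding Qv_def by simp
  also have "\<dots> \<le> (\<Prod>i<n. Phi \<theta> (w i))"
    by (rule leaf_bound[OF th Output pair leaf]) auto
  finally show ?case by simp
next
  case (Ask e t1 t2)
  define \<mu> where "\<mu> = \<theta> * ln (1/p)"
  have mu: "0 \<le> \<mu>" using th p by (simp add: \<mu>_def)
  define d where "d = max (depth t1) (depth t2)"
  have dep: "depth (Ask e t1 t2) = Suc d" by (simp add: d_def)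
  have PP: "0 \<le> (\<Prod>i<n. Phi \<theta> (w' i))" if "\<And>i s. 0 \<le> w' i s" for w'
    by (rule prod_nonneg) (use Phi_ge[OF th] that in auto)
  have IH1: "Qv p n H G t1 w' \<le> exp (\<mu> * real d) * (\<Prod>i<n. Phi \<theta> (w' i))" if "\<And>i s. 0 \<le> w' i s" for w'
  proof -
    have "Qv p n H G t1 w' \<le> exp (\<mu> * real (depth t1)) * (\<Prod>i<n. Phi \<theta> (w' i))"
      using Ask.IH(1)[of w'] that by (simp add: \<mu>_def)
    also have "\<dots> \<le> exp (\<mu> * real d) * (\<Prod>i<n. Phi \<theta> (w' i))"
      by (rule mult_right_mono) (use mu PP[OF that] in \<open>auto simp: d_def intro: mult_left_mono\<close>)
    finally show ?thesis .
  qed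
  have IH2: "Qv p n H G t2 w' \<le> exp (\<mu> * real d) * (\<Prod>i<n. Phi \<theta> (w' i))" if "\<And>i s. 0 \<le> w' i s" for w'
  proof -
    have "Qv p n H G t2 w' \<le> exp (\<mu> * real (depth t2)) * (\<Prod>i<n. Phi \<theta> (w' i))"
      using Ask.IH(2)[of w'] that by (simp add: \<mu>_def)
    also have "\<dots> \<le> exp (\<mu> * real d) * (\<Prod>i<n. Phi \<theta> (w' i))"
      by (rule mult_right_mono) (use mu PP[OF that] in \<open>auto simp: d_def intro: mult_left_mono\<close>)
    finally show ?thesis .
  qed
  have expd: "exp (\<mu> * real (Suc d)) = exp \<mu> * exp (\<mu> * real d)"
    by (simp add: algebra_simps mult_exp_exp)
  have Qask: "Qv p n H G (Ask e t1 t2) w = (\<Sum>\<sigma>\<in>Sig n. Wt n w \<sigma> *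
     (if e \<in> H \<sigma> then measure_pmf.prob (run p (H \<sigma>) t1) (G \<sigma>)
     else p * measure_pmf.prob (run p (H \<sigma>) t1) (G \<sigma>) + (1 - p) * measure_pmf.prob (run p (H \<sigma>) t2) (G \<sigma>)))"
  proof -
    have ptw: "measure_pmf.prob (run p (H \<sigma>) (Ask e t1 t2)) (G \<sigma>) =
     (if e \<in> H \<sigma> then measure_pmf.prob (run p (H \<sigma>) t1) (G \<sigma>)
     else p * measure_pmf.prob (run p (H \<sigma>) t1) (G \<sigma>) + (1 - p) * measure_pmf.prob (run p (H \<sigma>) t2) (G \<sigma>))" for \<sigma>
      by (rule run_Ask_prob) (use p in auto)
    show ?thesis unfolding Qv_def by (simp only: ptw)
  qed
  show ?case
  proof (cases "e div 2 < n")
    case True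
    define i where "i = e div 2"
    define j where "j = e mod 2"
    have e: "e = 2*i+j" and j: "j < 2" and i: "i < n" using True by (auto simp: i_def j_def)
    define g1 where "g1 = (\<lambda>s. if s = Suc j then p * w i s else w i s)"
    define g2 where "g2 = (\<lambda>s. if s = Suc j then (1-p) * w i s else 0)"
    define w1 where "w1 = w(i := g1)"
    define w2 where "w2 = w(i := g2)"
    have w1: "0 \<le> w1 i' s" for i' s using Ask.prems p by (auto simp: w1_def g1_def)
    have w2: "0 \<le> w2 i' s" for i' s using Ask.prems p by (auto simp: w2_def g2_def)
    have ptw: "Wt n w \<sigma> * (if e \<in> H \<sigma> then measure_pmf.prob (run p (H \<sigma>) t1) (G \<sigma>)
         else p * measure_pmf.prob (run p (H \<sigma>) t1) (G \<sigma>) + (1 - p) * measure_pmf.prob (run p (H \<sigma>) t2) (G \<sigma>)) =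
        Wt n w1 \<sigma> * measure_pmf.prob (run p (H \<sigma>) t1) (G \<sigma>) + Wt n w2 \<sigma> * measure_pmf.prob (run p (H \<sigma>) t2) (G \<sigma>)"
      if \<sigma>: "\<sigma> \<in> Sig n" for \<sigma>
    proof -
      have eH: "e \<in> H \<sigma> \<longleftrightarrow> \<sigma> i \<noteq> Suc j" using pair[OF i j \<sigma>] e by simp
      show ?thesis
        unfolding w1_def w2_def Wt_upd[OF i] Wt_split[OF i, of w]
        using eH by (auto simp: g1_def g2_def algebra_simps)
    qed
    have "Qv p n H G (Ask e t1 t2) w = (\<Sum>\<sigma>\<in>Sig n. Wt n w1 \<sigma> * measure_pmf.prob (run p (H \<sigma>) t1) (G \<sigma>) + Wt n w2 \<sigma> * measure_pmf.prob (run p (H \<sigma>) t2) (G \<sigma>))"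
      unfolding Qask by (rule sum.cong) (simp_all only: ptw)
    also have "\<dots> = Qv p n H G t1 w1 + Qv p n H G t2 w2"
      unfolding Qv_def by (rule sum.distrib)
    also have "\<dots> \<le> exp (\<mu> * real d) * (\<Prod>k<n. Phi \<theta> (w1 k)) + exp (\<mu> * real d) * (\<Prod>k<n. Phi \<theta> (w2 k))"
      by (rule add_mono; rule IH1 IH2) (simp_all add: w1 w2)
    also have "\<dots> = exp (\<mu> * real d) * ((Phi \<theta> g1 + Phi \<theta> g2) * (\<Prod>k\<in>{..<n}-{i}. Phi \<theta> (w k)))"
      unfolding w1_def w2_def prodPhi_upd[OF i] by (simp add: algebra_simps)
    also have "\<dots> \<le> exp (\<mu> * real d) * ((exp \<mu> * Phi \<theta> (w i)) * (\<Prod>k\<in>{..<n}-{i}. Phi \<theta> (w k)))"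
    proof -
      have "Phi \<theta> g1 + Phi \<theta> g2 \<le> exp \<mu> * Phi \<theta> (w i)"
        unfolding g1_def g2_def \<mu>_def
        by (rule Phi_step[OF th p]) (use j Ask.prems in auto)
      moreover have "0 \<le> (\<Prod>k\<in>{..<n}-{i}. Phi \<theta> (w k))"
        by (rule prod_nonneg) (use Phi_ge[OF th] Ask.prems in auto)
      ultimately have "(Phi \<theta> g1 + Phi \<theta> g2) * (\<Prod>k\<in>{..<n}-{i}. Phi \<theta> (w k)) \<le> (exp \<mu> * Phi \<theta> (w i)) * (\<Prod>k\<in>{..<n}-{i}. Phi \<theta> (w k))"
        by (rule mult_right_mono)
      then show ?thesis by (rule mult_left_mono) simp
    qed
    also have "\<dots> = exp (\<mu> * real (Suc d)) * (\<Prod>k<n. Phi \<theta> (w k))"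
      unfolding expd using prodPhi_upd[OF i, of \<theta> w "w i"] by simp
    finally show ?thesis unfolding dep \<mu>_def .
  next
    case False
    then have "n \<le> e div 2" by simp
    from other[OF this] show ?thesis
    proof
      assume all: "\<forall>\<sigma>\<in>Sig n. e \<in> H \<sigma>"
      have "Qv p n H G (Ask e t1 t2) w = (\<Sum>\<sigma>\<in>Sig n. Wt n w \<sigma> * measure_pmf.prob (run p (H \<sigma>) t1) (G \<sigma>))"
        unfolding Qask using all by (intro sum.cong) auto
      also have "\<dots> = Qv p n H G t1 w" unfolding Qv_def ..
      also have "\<dots> \<le> exp (\<mu> * real d) * (\<Prod>i<n. Phi \<theta> (w i))" by (rule IH1) (rule Ask.prems)
      also have "\<dots> \<le> exp (\<mu> * real (Suc d)) * (\<Prod>i<n. Phi \<theta> (w i))"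
        by (rule mult_right_mono) (use mu PP[of w] Ask.prems in \<open>auto intro: mult_left_mono\<close>)
      finally show ?thesis unfolding dep \<mu>_def .
    next
      assume none: "\<forall>\<sigma>\<in>Sig n. e \<notin> H \<sigma>"
      have "Qv p n H G (Ask e t1 t2) w = (\<Sum>\<sigma>\<in>Sig n. p * (Wt n w \<sigma> * measure_pmf.prob (run p (H \<sigma>) t1) (G \<sigma>)) + (1 - p) * (Wt n w \<sigma> * measure_pmf.prob (run p (H \<sigma>) t2) (G \<sigma>)))"
        unfolding Qask using none by (intro sum.cong) (auto simp: algebra_simps)
      also have "\<dots> = p * Qv p n H G t1 w + (1 - p) * Qv p n H G t2 w"
        unfolding Qv_def sum_distrib_left sum.distrib by simp
      also have "\<dots> \<le> p * (exp (\<mu> * real d) * (\<Prod>i<n. Phi \<theta> (w i))) + (1 - p) * (exp (\<mu> * real d) * (\<Prod>i<n. Phi \<theta> (w i)))"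
        using IH1[of w] IH2[of w] Ask.prems p
        by (intro add_mono mult_left_mono) auto
      also have "\<dots> = exp (\<mu> * real d) * (\<Prod>i<n. Phi \<theta> (w i))" by (simp add: algebra_simps)
      also have "\<dots> \<le> exp (\<mu> * real (Suc d)) * (\<Prod>i<n. Phi \<theta> (w i))"
        by (rule mult_right_mono) (use mu PP[of w] Ask.prems in \<open>auto intro: mult_left_mono\<close>)
      finally show ?thesis unfolding dep \<mu>_def .
    qed
  qed
qed



definition gV :: "nat \<Rightarrow> nat set" where "gV m = {0..Suc ((m-1) div 2)}"
definition gE :: "nat \<Rightarrow> nat set" where "gE m = {..<m}"
definition gends :: "nat \<Rightarrow> nat set" where "gends e = {e div 2, Suc (e div 2)}"
definition gH :: "nat \<Rightarrow> (nat \<Rightarrow> nat) \<Rightarrow> nat set" where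
  "gH m \<sigma> = {e. e < m \<and> \<not> (e div 2 < m div 2 \<and> \<sigma> (e div 2) = Suc (e mod 2))}"
definition gG :: "nat \<Rightarrow> (nat \<Rightarrow> nat) \<Rightarrow> nat set set" where
  "gG m \<sigma> = {T. spanning_tree (gV m) (gE m) gends T \<and> T \<subseteq> gH m \<sigma>}"

lemma g_multigraph: "multigraph (gV m) (gE m) gends"
  unfolding multigraph_def gV_def gE_def gends_def
proof (intro conjI ballI)
  fix e assume "e \<in> {..<m}"
  then have "e div 2 \<le> (m - 1) div 2" by (intro div_le_mono) auto
  then show "{e div 2, Suc (e div 2)} \<subseteq> {0..Suc ((m - 1) div 2)}" by auto
  show "card {e div 2, Suc (e div 2)} = 2" by simp
qed auto

lemma reach_up:
  assumes "\<And>k. u \<le> k \<Longrightarrow> k < v \<Longrightarrow> \<exists>e\<in>F. gends e = {k, Suc k}"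
  shows "u \<le> v \<Longrightarrow> reach gends F u v"
  using assms
proof (induction v)
  case 0 then show ?case by (auto intro: reach.refl)
next
  case (Suc v)
  show ?case
  proof (cases "u = Suc v")
    case True then show ?thesis by (auto intro: reach.refl)
  next
    case False
    then have r: "reach gends F u v" using Suc by auto
    have "u \<le> v" "v < Suc v" using Suc.prems(1) False by auto
    then obtain e where "e \<in> F" "gends e = {v, Suc v}" using Suc.prems(2) by blast
    then show ?thesis using r by (auto intro: reach.step)
  qed
qed

lemma reach_down:
  assumes "\<And>k. v \<le> k \<Longrightarrow> k < u \<Longrightarrow> \<exists>e\<in>F. gends e = {k, Suc k}"
  shows "v \<le> u \<Longrightarrow> reach gends F u v"
proof -
  have aux: "d \<le> u \<Longrightarrow> u - d \<ge> v \<Longrightarrow> reach gends F u (u - d)" for d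
  proof (induction d)
    case 0 then show ?case by (auto intro: reach.refl)
  next
    case (Suc d)
    then have r: "reach gends F u (u - d)" by auto
    have "v \<le> u - Suc d" "u - Suc d < u" using Suc.prems by auto
    then obtain e where e: "e \<in> F" "gends e = {u - Suc d, Suc (u - Suc d)}" using assms by blast
    have "Suc (u - Suc d) = u - d" using Suc.prems by simp
    then have "gends e = {u - d, u - Suc d}" using e by auto
    then show ?case using r e by (auto intro: reach.step)
  qed
  assume "v \<le> u"
  then show ?thesis using aux[of "u - v"] by simp
qed

lemma conn_path:
  assumes "F \<subseteq> E" "\<And>k. k < tp \<Longrightarrow> \<exists>e\<in>F. gends e = {k, Suc k}"
  shows "conn_spanning {0..tp} E gends F"
  unfolding conn_spanning_def
proof (intro conjI ballI)
  show "F \<subseteq> E" by fact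
  fix u v assume "u \<in> {0..tp}" "v \<in> {0..tp}"
  then show "reach gends F u v"
  proof (cases "u \<le> v")
    case True
    show ?thesis by (rule reach_up[OF _ True]) (use assms(2) \<open>v \<in> {0..tp}\<close> in auto)
  next
    case False
    show ?thesis by (rule reach_down) (use assms(2) \<open>u \<in> {0..tp}\<close> False in auto)
  qed
qed

lemma gH_conn:
  assumes m: "1 \<le> m" and \<sigma>: "\<sigma> \<in> Sig (m div 2)"
  shows "conn_spanning (gV m) (gE m) gends (gH m \<sigma>)"
  unfolding gV_def
proof (rule conn_path)
  show "gH m \<sigma> \<subseteq> gE m" by (auto simp: gH_def gE_def)
  fix k assume k: "k < Suc ((m - 1) div 2)"
  show "\<exists>e\<in>gH m \<sigma>. gends e = {k, Suc k}"
  proof (cases "k < m div 2")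
    case True
    define e where "e = (if \<sigma> k = 1 then 2*k+1 else 2*k)"
    have "e div 2 = k" "e < m" using True by (auto simp: e_def)
    moreover have "\<sigma> k \<noteq> Suc (e mod 2)" by (auto simp: e_def)
    ultimately show ?thesis by (intro bexI[of _ e]) (auto simp: gH_def gends_def)
  next
    case False
    have "2*k < m" using k m by linarith
    then show ?thesis using False by (intro bexI[of _ "2*k"]) (auto simp: gH_def gends_def)
  qed
qed

lemma gH_pair:
  assumes "i < m div 2" "j < (2::nat)"
  shows "2*i+j \<in> gH m \<sigma> \<longleftrightarrow> \<sigma> i \<noteq> Suc j"
proof -
  have "(2*i+j) div 2 = i" "(2*i+j) mod 2 = j" "2*i+j < m" using assms by auto
  then show ?thesis using assms by (auto simp: gH_def)
qed

lemma gH_other: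
  assumes "m div 2 \<le> e div 2"
  shows "(\<forall>\<sigma>\<in>Sig (m div 2). e \<in> gH m \<sigma>) \<or> (\<forall>\<sigma>\<in>Sig (m div 2). e \<notin> gH m \<sigma>)"
  using assms by (cases "e < m") (auto simp: gH_def)

lemma cut_reach:
  assumes "2*i \<notin> S" "Suc (2*i) \<notin> S"
  shows "reach gends S u v \<Longrightarrow> u \<le> i \<Longrightarrow> v \<le> i"
proof (induction rule: reach.induct)
  case refl then show ?case .
next
  case (step u v e w)
  then have v: "v \<le> i" by simp
  show ?case
  proof (rule ccontr)
    assume "\<not> w \<le> i"
    then have wi: "i < w" by simp
    have E: "{e div 2, Suc (e div 2)} = {v, w}" using step.hyps(3) by (simp add: gends_def)
    then have "v = e div 2 \<and> w = Suc (e div 2)" using v wi by (auto simp: doubleton_eq_iff)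
    then have "e div 2 = i" using v wi by simp
    then have "e = 2*i \<or> e = Suc (2*i)" by auto
    then show False using step.hyps(2) assms by auto
  qed
qed

lemma gG_leaf:
  assumes "S \<in> gG m \<sigma>"
  shows "S \<subseteq> gH m \<sigma> \<and> (\<forall>i<m div 2. 2*i \<in> S \<or> Suc (2*i) \<in> S)"
proof (intro conjI allI impI)
  show "S \<subseteq> gH m \<sigma>" using assms by (simp add: gG_def)
  fix i assume i: "i < m div 2"
  show "2*i \<in> S \<or> Suc (2*i) \<in> S"
  proof (rule ccontr)
    assume "\<not> (2*i \<in> S \<or> Suc (2*i) \<in> S)"
    then have n: "2*i \<notin> S" "Suc (2*i) \<notin> S" by auto
    have cs: "conn_spanning (gV m) (gE m) gends S" using assms by (simp add: gG_def spanning_tree_def)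
    have "Suc i \<le> Suc ((m - 1) div 2)" using i by linarith
    then have "0 \<in> gV m" "Suc i \<in> gV m" by (auto simp: gV_def)
    then have "reach gends S 0 (Suc i)" using cs by (auto simp: conn_spanning_def)
    then have "Suc i \<le> i" using cut_reach[OF n] by simp
    then show False by simp
  qed
qed



lemma final_arith:
  fixes l n m q :: real
  assumes l: "0 < l" and n1: "1 / l^2 \<le> n" and n2: "2 / l \<le> n" and n3: "12 * l \<le> ln n"
    and m: "9 \<le> m" and nm: "(m - 1) / 2 \<le> n"
    and q: "n * (ln (n * l) / (3 * l) - ln 2) \<le> q"
  shows "1 / (72 * l) * m * ln m \<le> q"
proof -
  have npos: "0 < n" using n2 l by (smt (verit) divide_pos_pos)
  have "ln (1 / l^2) \<le> ln n" using n1 l npos by (subst ln_le_cancel_iff) auto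
  moreover have "ln (1 / l^2) = - 2 * ln l" using l by (simp add: ln_div ln_realpow)
  ultimately have a: "- ln n / 2 \<le> ln l" by simp
  have "ln (n * l) = ln n + ln l" using npos l by (simp add: ln_mult_pos)
  then have b: "ln n / 2 \<le> ln (n * l)" using a by simp
  have ln2: "ln 2 \<le> ln n / (12 * l)"
  proof -
    have "ln (2::real) \<le> 1" using ln_2_less_1 by simp
    also have "1 \<le> ln n / (12 * l)" using n3 l by (simp add: field_simps)
    finally show ?thesis .
  qed
  have c: "ln n / (12 * l) \<le> ln (n * l) / (3 * l) - ln 2"
  proof -
    have "ln n / (6 * l) \<le> ln (n * l) / (3 * l)" using b l by (simp add: field_simps)
    then show ?thesis using ln2 by (simp add: field_simps)
  qed
  have d: "n * (ln n / (12 * l)) \<le> q"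
    using mult_left_mono[OF c, of n] npos q by simp
  have m3: "m / 3 \<le> n" using nm m by simp
  have lnm: "ln m / 2 \<le> ln n"
  proof -
    have "ln (m / 3) \<le> ln n" using m3 m npos by (subst ln_le_cancel_iff) auto
    moreover have "ln (m / 3) = ln m - ln 3" using m by (simp add: ln_div)
    moreover have "ln 9 \<le> ln m" using m by (subst ln_le_cancel_iff) auto
    moreover have "ln (9::real) = 2 * ln 3"
    proof -
      have "ln ((3::real)^2) = 2 * ln 3" by (subst ln_realpow) auto
      then show ?thesis by simp
    qed
    ultimately show ?thesis by simp
  qed
  have lnm0: "0 \<le> ln m" using m by simp
  have "(m / 3) * (ln m / 2) \<le> n * ln n"
    by (rule mult_mono) (use m3 lnm lnm0 npos in auto)
  then have "1 / (72 * l) * m * ln m \<le> n * (ln n / (12 * l))"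
    using l by (simp add: field_simps)
  then show ?thesis using d by simp
qed

lemma succ_eq:
  "success_prob p (gV m) (gE m) gends A (gH m \<sigma>) =
   (\<integral>t. measure_pmf.prob (run p (gH m \<sigma>) t) (gG m \<sigma>) \<partial>measure_pmf A)"
  unfolding success_prob_def gG_def by (rule meas_bind)

lemma per_m:
  assumes p: "0 < p" "p < 1/2" and l_def: "l = ln (1/p)" and n: "n = m div 2"
    and n1: "1 / l^2 \<le> real n" and n2: "2 / l \<le> real n" and n3: "12 * l \<le> ln (real n)"
    and m: "9 \<le> m"
    and dep: "\<forall>t\<in>set_pmf A. depth t \<le> q"
    and succ: "\<forall>H. conn_spanning (gV m) (gE m) gends H \<longrightarrow> success_prob p (gV m) (gE m) gends A H \<ge> 1 - 1/2"
  shows "real q \<ge> 1/(72*l) * real m * ln (real m)"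
proof -
  have l: "0 < l" using p l_def by simp
  have npos: "0 < real n" using n2 l by (smt (verit) divide_pos_pos)
  have nl: "2 \<le> real n * l" using n2 l by (simp add: field_simps)
  define \<theta> where "\<theta> = 1 / (real n * l)"
  have th: "0 < \<theta>" using npos l by (simp add: \<theta>_def)
  have th1: "\<theta> < 1" using nl by (simp add: \<theta>_def)
  have thl: "\<theta> * ln (1/p) = 1 / real n" using l npos by (simp add: \<theta>_def l_def[symmetric])
  define f where "f \<sigma> t = measure_pmf.prob (run p (gH m \<sigma>) t) (gG m \<sigma>)" for \<sigma> t
  have intf: "integrable (measure_pmf A) (f \<sigma>)" for \<sigma>
    by (rule integ_pmf_bounded[where B=1]) (auto simp: f_def)
  have S: "1/2 \<le> (\<integral>t. f \<sigma> t \<partial>measure_pmf A)" if "\<sigma> \<in> Sig n" for \<sigma>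
  proof -
    have "conn_spanning (gV m) (gE m) gends (gH m \<sigma>)"
      by (rule gH_conn) (use m that n in auto)
    then have "1 - 1/2 \<le> success_prob p (gV m) (gE m) gends A (gH m \<sigma>)" using succ by blast
    then show ?thesis unfolding succ_eq f_def by simp
  qed
  have cardS: "card (Sig n) = 3^n"
    unfolding Sig_def by (subst card_PiE) (auto simp: numeral_eq_Suc)
  have "1/2 * real (card (Sig n)) \<le> (\<Sum>\<sigma>\<in>Sig n. \<integral>t. f \<sigma> t \<partial>measure_pmf A)"
    using sum_mono[of "Sig n" "\<lambda>_. 1/2::real" "\<lambda>\<sigma>. \<integral>t. f \<sigma> t \<partial>measure_pmf A"] S by simp
  also have "\<dots> = (\<integral>t. (\<Sum>\<sigma>\<in>Sig n. f \<sigma> t) \<partial>measure_pmf A)"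
    by (rule Bochner_Integration.integral_sum[symmetric]) (rule intf)
  also have "\<dots> \<le> exp (real q / real n) * (\<Prod>i<n. Phi \<theta> (\<lambda>_. 1))"
  proof (rule measure_pmf.integral_le_const)
    show "integrable (measure_pmf A) (\<lambda>t. \<Sum>\<sigma>\<in>Sig n. f \<sigma> t)"
      by (rule Bochner_Integration.integrable_sum) (rule intf)
    show "AE t in measure_pmf A. (\<Sum>\<sigma>\<in>Sig n. f \<sigma> t) \<le> exp (real q / real n) * (\<Prod>i<n. Phi \<theta> (\<lambda>_. 1))"
    proof (rule AE_pmfI)
      fix t assume t: "t \<in> set_pmf A"
      have "(\<Sum>\<sigma>\<in>Sig n. f \<sigma> t) = Qv p n (gH m) (gG m) t (\<lambda>_ _. 1)"
        unfolding Qv_def Wt_def f_def by simp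
      also have "\<dots> \<le> exp (\<theta> * ln (1/p) * real (depth t)) * (\<Prod>i<n. Phi \<theta> ((\<lambda>_ _. 1) i))"
      proof (rule main_bound[OF th])
        show "0 < p" "p < 1" using p by auto
        show "(2 * i + j \<in> gH m \<sigma>) = (\<sigma> i \<noteq> Suc j)" if "i < n" "j < 2" "\<sigma> \<in> Sig n" for i j \<sigma>
          using gH_pair[of i m j \<sigma>] that n by simp
        show "(\<forall>\<sigma>\<in>Sig n. e \<in> gH m \<sigma>) \<or> (\<forall>\<sigma>\<in>Sig n. e \<notin> gH m \<sigma>)" if "n \<le> e div 2" for e
          using gH_other[of m e] that n by simp
        show "S \<subseteq> gH m \<sigma> \<and> (\<forall>i<n. 2 * i \<in> S \<or> Suc (2 * i) \<in> S)" if "\<sigma> \<in> Sig n" "S \<in> gG m \<sigma>" for \<sigma> S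
          using gG_leaf[OF that(2)] n by simp
      qed simp
      also have "\<dots> \<le> exp (real q / real n) * (\<Prod>i<n. Phi \<theta> (\<lambda>_. 1))"
      proof (rule mult_right_mono)
        have "real (depth t) \<le> real q" using dep t by simp
        then have "\<theta> * ln (1/p) * real (depth t) \<le> real q / real n"
          unfolding thl using npos by (simp add: divide_right_mono)
        then show "exp (\<theta> * ln (1/p) * real (depth t)) \<le> exp (real q / real n)" by simp
        show "0 \<le> (\<Prod>i<n. Phi \<theta> (\<lambda>_. 1))"
          by (rule prod_nonneg) (use Phi_ge[OF th, of "\<lambda>_. 1"] in simp)
      qed
      finally show "(\<Sum>\<sigma>\<in>Sig n. f \<sigma> t) \<le> exp (real q / real n) * (\<Prod>i<n. Phi \<theta> (\<lambda>_. 1))" .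
    qed
  qed
  finally have main: "1/2 * 3^n \<le> exp (real q / real n) * Phi \<theta> (\<lambda>_. 1) ^ n"
    unfolding cardS by simp
  define L where "L = ell \<theta> 1"
  have L: "L = \<theta> * ln (real n * l)"
    using th1 th l npos by (simp add: L_def ell_def \<theta>_def ln_div)
  have L1: "L \<le> 1" unfolding L_def using ell_le[OF th, of 1] by simp
  have L0: "0 \<le> L" unfolding L_def using ell_nonneg[OF th] by simp
  have Ph: "Phi \<theta> (\<lambda>_. 1) = 3 * (1 - L / 3)" by (simp add: Phi_def L_def)
  have "(1 - L/3)^n \<le> exp (- L/3) ^ n"
    by (rule power_mono) (use L1 exp_ge_add_one_self[of "- L/3"] in auto)
  also have "\<dots> = exp (- real n * L / 3)" by (subst exp_of_nat_mult[symmetric]) simp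
  finally have pw: "(1 - L/3)^n \<le> exp (- real n * L / 3)" .
  have "1/2 * 3^n \<le> exp (real q / real n) * (3^n * (1 - L/3)^n)"
  proof -
    have "(3 * (1 - L/3))^n = 3^n * (1 - L/3)^n" by (rule power_mult_distrib)
    then show ?thesis using main unfolding Ph by simp
  qed
  also have "\<dots> \<le> exp (real q / real n) * (3^n * exp (- real n * L / 3))"
    using pw by (intro mult_left_mono) auto
  finally have "3^n * (1/2) \<le> 3^n * (exp (real q / real n) * exp (- real n * L / 3))" by (simp add: algebra_simps)
  then have "1/2 \<le> exp (real q / real n) * exp (- real n * L / 3)"
    by (subst (asm) mult_le_cancel_left_pos) auto
  moreover have "exp (real q / real n) * exp (- real n * L / 3) = exp (real q / real n - real n * L / 3)"
    by (subst mult_exp_exp) simp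
  ultimately have "1/2 \<le> exp (real q / real n - real n * L / 3)" by simp
  then have "ln (1/2) \<le> real q / real n - real n * L / 3"
    by (metis exp_gt_zero ln_exp ln_le_cancel_iff zero_less_divide_1_iff zero_less_numeral)
  moreover have "ln (1/2::real) = - ln 2" by (simp add: ln_div)
  moreover have "real n * L = ln (real n * l) / l" using npos l by (simp add: L \<theta>_def)
  ultimately have "ln (real n * l) / (3 * l) - ln 2 \<le> real q / real n" by simp
  then have qb: "real n * (ln (real n * l) / (3 * l) - ln 2) \<le> real q"
    using npos by (simp add: field_simps)
  have "m \<le> 2 * (m div 2) + 1" by linarith
  then have "real m \<le> 2 * real n + 1" unfolding n by linarith
  then have nm: "(real m - 1) / 2 \<le> real n" by simp
  show ?thesis
    by (rule final_arith[OF l n1 n2 n3 _ nm qb]) (use m in simp)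
qed

theorem lemma8:
  fixes p :: real
  assumes "0 < p" and "p < 1/2"
  shows "\<exists>\<delta>>0. \<exists>c>0. \<exists>M::nat. \<forall>m\<ge>M.
    \<exists>(V::nat set) (E::nat set) (ends::nat \<Rightarrow> nat set).
      multigraph V E ends \<and> card E = m \<and>
      (\<forall>(A::nat qtree pmf) (q::nat).
         (\<forall>t\<in>set_pmf A. depth t \<le> q) \<and>
         (\<forall>H. conn_spanning V E ends H \<longrightarrow> success_prob p V E ends A H \<ge> 1 - \<delta>)
         \<longrightarrow> real q \<ge> c * real m * ln (real m))"
proof -
  define l where "l = ln (1/p)"
  have l: "0 < l" using assms by (simp add: l_def)
  define N0 where "N0 = nat \<lceil>1/l^2 + 2/l + exp (12*l)\<rceil>"
  define M where "M = 2*N0 + 9"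
  have main: "\<forall>m\<ge>M.
    \<exists>(V::nat set) (E::nat set) (ends::nat \<Rightarrow> nat set).
      multigraph V E ends \<and> card E = m \<and>
      (\<forall>(A::nat qtree pmf) (q::nat).
         (\<forall>t\<in>set_pmf A. depth t \<le> q) \<and>
         (\<forall>H. conn_spanning V E ends H \<longrightarrow> success_prob p V E ends A H \<ge> 1 - 1/2)
         \<longrightarrow> real q \<ge> 1/(72*l) * real m * ln (real m))"
  proof (intro allI impI)
    fix m assume mM: "M \<le> m"
    define n where "n = m div 2"
    have "N0 \<le> n" using mM by (simp add: M_def n_def)
    then have "real N0 \<le> real n" by simp
    moreover have "1/l^2 + 2/l + exp (12*l) \<le> real N0" unfolding N0_def by linarith
    ultimately have nb: "1/l^2 + 2/l + exp (12*l) \<le> real n" by linarith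
    have t1: "0 \<le> 1/l^2" "0 \<le> 2/l" "0 < exp (12*l)" using l by auto
    have n1: "1/l^2 \<le> real n" and n2: "2/l \<le> real n" and ne: "exp (12*l) \<le> real n"
      using nb t1 by linarith+
    have n3: "12 * l \<le> ln (real n)"
      using ne t1(3) by (metis dual_order.strict_trans1 ln_exp ln_le_cancel_iff)
    have m9: "9 \<le> m" using mM by (simp add: M_def)
    show "\<exists>(V::nat set) (E::nat set) (ends::nat \<Rightarrow> nat set).
      multigraph V E ends \<and> card E = m \<and>
      (\<forall>(A::nat qtree pmf) (q::nat).
         (\<forall>t\<in>set_pmf A. depth t \<le> q) \<and>
         (\<forall>H. conn_spanning V E ends H \<longrightarrow> success_prob p V E ends A H \<ge> 1 - 1/2)
         \<longrightarrow> real q \<ge> 1/(72*l) * real m * ln (real m))"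
    proof (intro exI conjI allI impI)
      show "multigraph (gV m) (gE m) gends" by (rule g_multigraph)
      show "card (gE m) = m" by (simp add: gE_def)
      fix A :: "nat qtree pmf" and q :: nat
      assume h: "(\<forall>t\<in>set_pmf A. depth t \<le> q) \<and>
         (\<forall>H. conn_spanning (gV m) (gE m) gends H \<longrightarrow> success_prob p (gV m) (gE m) gends A H \<ge> 1 - 1/2)"
      show "real q \<ge> 1/(72*l) * real m * ln (real m)"
        by (rule per_m[OF assms l_def n_def n1 n2 n3 m9]) (use h in auto)
    qed
  qed
  have c: "0 < 1/(72*l)" using l by simp
  show ?thesis
    by (rule exI[of _ "1/2"], rule conjI, simp, rule exI[of _ "1/(72*l)"], rule conjI[OF c], rule exI[of _ M], rule main)
qed

end
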